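(* Let $p, q$ be primes and $n, r \geq 1$ integers such that $p^n < qp^r$, $q$ divides $p^n - 1$, and $p^r$ divides $n$. Then exactly one of the following holds: (1) $p = 2$, $q = 3$, $n = 2$, $r = 1$; (2) $p = 2$, $q = 5$, $n = 4$, $r = 2$; (3) $p > 2$, $q = (p^p - 1)/(p-1)$, $n = p$, $r = 1$. *)

theory Defs
  imports "HOL-Computational_Algebra.Primes"
begin

end

theory Submission
  imports Defs
begin

lemma geo_nat: "((x::nat) - 1) * (\<Sum>i<m. x^i) = x^m - 1" if "x \<ge> 1" for x m
  using that
proof (induction m)
  case 0 then show ?case by simp
next
  case (Suc m)
  have "(x - 1) * (\<Sum>i<Suc m. x^i) = (x-1)*(\<Sum>i<m. x^i) + (x-1)*x^m"
    by (simp add: algebra_simps)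
  also have "\<dots> = x^m - 1 + (x-1)*x^m" using Suc by simp
  also have "\<dots> = x^Suc m - 1"
  proof -
    have "x^m \<ge> 1" using Suc.prems by simp
    then show ?thesis using Suc.prems
      by (simp add: algebra_simps diff_mult_distrib)
  qed
  finally show ?case .
qed

lemma geo_bound: "(\<Sum>i<m. x^i) < 2 * (x::nat)^(m-1)" if "x \<ge> 2" "m \<ge> 1" for x m
proof -
  have "(x-1) * (\<Sum>i<m. x^i) = x^m - 1" using geo_nat[of x m] that by simp
  also have "\<dots> < x^m" using that by simp
  also have "x^m = x * x^(m-1)" using that by (cases m) auto
  also have "\<dots> \<le> (2*(x-1)) * x^(m-1)" using that by (intro mult_right_mono) auto
  finally have "(x-1) * (\<Sum>i<m. x^i) < (x-1) * (2 * x^(m-1))" by (simp add: ac_simps)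
  then show ?thesis by simp
qed

lemma two_pow_ge: "2 * r \<le> (2::nat)^r" if "r \<ge> 1" for r
  using that
proof (induction r rule: dec_induct)
  case base then show ?case by simp
next
  case (step r) then show ?case by simp
qed

lemma pow_gt: "r < (p::nat)^(r-1)" if "r \<ge> 3" "p \<ge> 2" for r p
proof -
  have "r < 2^(r-1)" using that(1)
  proof (induction r rule: dec_induct)
    case base then show ?case by simp
  next
    case (step r) then show ?case by (cases r) auto
  qed
  also have "\<dots> \<le> p^(r-1)" using that by (simp add: power_mono)
  finally show ?thesis .
qed

theorem lemma6:
  fixes p q n r :: nat
  assumes "prime p" and "prime q" and "n \<ge> 1" and "r \<ge> 1"
    and "p ^ n < q * p ^ r"
    and "q dvd p ^ n - 1"
    and "p ^ r dvd n"
  shows "let C1 = (p = 2 \<and> q = 3 \<and> n = 2 \<and> r = 1);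
             C2 = (p = 2 \<and> q = 5 \<and> n = 4 \<and> r = 2);
             C3 = (p > 2 \<and> q = (p ^ p - 1) div (p - 1) \<and> n = p \<and> r = 1)
         in (C1 \<and> \<not> C2 \<and> \<not> C3) \<or> (\<not> C1 \<and> C2 \<and> \<not> C3) \<or> (\<not> C1 \<and> \<not> C2 \<and> C3)"
proof -
  have p2: "p \<ge> 2" using assms(1) prime_ge_2_nat by blast
  have q2: "q \<ge> 2" using assms(2) prime_ge_2_nat by blast
  have "p dvd p^r" using assms(4) by (simp add: dvd_power)
  then have "p dvd n" using assms(7) dvd_trans by blast
  then obtain k where nk: "n = p * k" by blast
  have k1: "k \<ge> 1" using nk assms(3) by (cases k) auto
  have npr: "p^r \<le> n" using assms(7) assms(3) by (simp add: dvd_imp_le)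
  have "2^r \<le> p^r" using p2 by (simp add: power_mono)
  with npr two_pow_ge[OF assms(4)] have n2r: "2*r \<le> n" by linarith
  define x where "x = p^k"
  define S where "S = (\<Sum>i<p. x^i)"
  have x2: "x \<ge> 2" unfolding x_def using self_le_power[of p k] p2 k1 by simp
  have pn: "p^n = x^p" unfolding x_def nk by (simp add: power_mult mult.commute)
  have fact: "p^n - 1 = (x-1) * S" unfolding S_def pn using geo_nat[of x p] x2 by simp
  have "q dvd (x-1) \<or> q dvd S"
    using assms(6) assms(2) fact prime_dvd_mult_iff by metis
  then have qS: "q dvd S"
  proof
    assume h: "q dvd x - 1"
    have "x - 1 > 0" using x2 by simp
    then have "q \<le> x - 1" using h dvd_imp_le by blast
    then have "q < p^k" unfolding x_def using x2 x_def by linarith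
    then have "q * p^r < p^k * p^r" using p2 by simp
    then have "p^n < p^(k+r)" using assms(5) unfolding power_add by linarith
    then have "n < k + r" using power_strict_increasing_iff[of p n "k+r"] p2 by simp
    moreover have "2*k \<le> p*k" using p2 by simp
    ultimately have False using nk n2r by linarith
    then show ?thesis ..
  qed
  have S0: "S > 0" unfolding S_def using p2 by (simp add: sum_pos2[where i=0] )
  have qleS: "q \<le> S" using qS S0 dvd_imp_le by blast
  have Sb: "S < 2 * x^(p-1)" unfolding S_def using geo_bound[of x p] x2 p2 by simp
  have xp1: "x^(p-1) = p^(n-k)" unfolding x_def nk
    by (simp add: power_mult[symmetric] diff_mult_distrib2 mult.commute)
  have kr: "k \<le> r"
  proof (rule ccontr)
    assume "\<not> k \<le> r"
    then have kr': "r < k" by simp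
    have "n - k + r \<le> n - 1" using kr' nk p2 by (simp add: diff_mult_distrib)
    have "p^n < q * p^r" by (rule assms(5))
    also have "\<dots> \<le> S * p^r" using qleS by simp
    also have "\<dots> < 2 * p^(n-k) * p^r" using Sb xp1 p2 by simp
    also have "\<dots> = 2 * p^(n-k+r)" by (simp add: power_add)
    also have "\<dots> \<le> 2 * p^(n-1)" using \<open>n - k + r \<le> n - 1\<close> p2 by (simp add: power_increasing)
    also have "\<dots> \<le> p * p^(n-1)" using p2 by simp
    also have "\<dots> = p^n" using assms(3) by (cases n) auto
    finally show False by simp
  qed
  have "p * p^(r-1) \<le> p * r"
  proof -
    have "p * p^(r-1) = p^r" using assms(4) by (cases r) auto
    also have "\<dots> \<le> p * k" using npr nk by simp
    also have "\<dots> \<le> p * r" using kr by simp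
    finally show ?thesis .
  qed
  then have pr: "p^(r-1) \<le> r" using p2 by simp
  have cases: "r = 1 \<or> (r = 2 \<and> p = 2)"
  proof -
    have "r \<le> 2" using pow_gt[of r p] pr p2 by linarith
    moreover have "r = 2 \<Longrightarrow> p = 2" using pr p2 by simp
    ultimately show ?thesis using assms(4) by linarith
  qed
  then show ?thesis
  proof
    assume r1: "r = 1"
    then have k1': "k = 1" using kr k1 by simp
    then have np: "n = p" using nk by simp
    have "p^p < q * p" using assms(5) np r1 by simp
    have Sp: "S < 2 * p^(p-1)" using Sb k1' x_def by simp
    have qgt: "p^(p-1) < q"
    proof -
      have "p^p = p*p^(p-1)" using p2 by (cases p) auto
      then have "p * p^(p-1) < p * q" using \<open>p^p < q*p\<close> by (simp add: mult.commute)
      then show ?thesis by simp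
    qed
    obtain m where m: "S = q * m" using qS by blast
    have "m = 1"
    proof (rule ccontr)
      assume "m \<noteq> 1"
      moreover have "m \<noteq> 0" using m S0 by auto
      ultimately have "m \<ge> 2" by simp
      then have "2 * q \<le> S" using m by simp
      then show False using Sp qgt by simp
    qed
    then have qS': "q = S" using m by simp
    have "(p-1) * S = p^p - 1" unfolding S_def x_def k1' using geo_nat[of p p] p2 by simp
    then have Sdiv: "S = (p^p - 1) div (p - 1)"
    proof -
      assume e: "(p-1) * S = p^p - 1"
      have "p - 1 \<noteq> 0" using p2 by simp
      then have "S = (p-1) * S div (p-1)" by simp
      then show ?thesis by (simp only: e)
    qed
    show ?thesis
    proof (cases "p = 2")
      case True
      then have "S = 3" using Sdiv by simp
      then show ?thesis using True qS' np r1 by (simp add: Let_def)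
    next
      case False
      then show ?thesis using p2 qS' Sdiv np r1 by (simp add: Let_def)
    qed
  next
    assume h: "r = 2 \<and> p = 2"
    then have "k = 2" using npr nk kr by simp
    then have n4: "n = 4" using nk h by simp
    have "S = 5" unfolding S_def x_def using h \<open>k = 2\<close> by (simp add: numeral_eq_Suc)
    moreover have "q \<le> S" using qleS .
    ultimately have "q \<in> {2,3,4,5}" using q2 by auto
    then have "q = 5" using qS \<open>S = 5\<close> by auto
    then show ?thesis using h n4 by (simp add: Let_def)
  qed
qed

end
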